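(* Let $r \geq 2$ and let $1 \leq t \leq k_1 \leq k_2 \leq \cdots \leq k_r$ be integers. There exists $n_0(k_{r-1},k_r,t)$, depending only on $k_{r-1}, k_r, t$, such that the following holds for all integers $n \geq n_0(k_{r-1},k_r,t)$ (with $k_r \leq n$). Let $\mathcal{F}_1, \mathcal{F}_2, \dots, \mathcal{F}_r$ be families of subsets of $[n]=\{1,\dots,n\}$ such that every member of $\mathcal{F}_i$ has size at most $k_i$, for each $i$. Suppose that for all $i, j \in \{1,\dots,r\}$, every $A \in \mathcal{F}_i$ and $B \in \mathcal{F}_j$ with $|A \cap B| < t$ satisfy $|A \triangle B| \leq \min\{k_i,k_j\} - t$. Then $$\prod_{i=1}^r |\mathcal{F}_i| \leq \prod_{i=1}^r \left( \sum_{j=0}^{k_i - t} \binom{n-t}{k_i - t - j} \right).$$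
   Context: $A \triangle B$ denotes the symmetric difference $(A\setminus B)\cup(B\setminus A)$. *)

theory Defs
  imports Main
begin

definition symdiff :: "'a set \<Rightarrow> 'a set \<Rightarrow> 'a set" where
  "symdiff A B = (A - B) \<union> (B - A)"

end

theory Submission
  imports Defs Complex_Main
begin

lemma symdiff_card:
  assumes "finite A" "finite B"
  shows "card (symdiff A B) + 2 * card (A \<inter> B) = card A + card B"
proof -
  have d: "(A - B) \<inter> (B - A) = {}" by blast
  have "card (symdiff A B) = card (A - B) + card (B - A)"
    unfolding symdiff_def using assms d by (simp add: card_Un_disjoint)
  moreover have "card (A - B) + card (A \<inter> B) = card A"
    using assms by (metis Diff_Diff_Int Diff_subset card_Diff_subset finite_Diff Int_commute card_mono
        Int_lower1 le_add_diff_inverse2 card_Diff_subset_Int finite_Int add.commute)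
  moreover have "card (B - A) + card (A \<inter> B) = card B"
    using assms by (metis card_Diff_subset_Int finite_Int Int_commute Int_lower1 card_mono le_add_diff_inverse2)
  ultimately show ?thesis by linarith
qed

lemma chain_mono:
  assumes "\<forall>i\<in>{1..<r}. k i \<le> k (Suc i)" "1 \<le> i" "i \<le> j" "j \<le> r"
  shows "(k i :: nat) \<le> k j"
  using assms(3,4)
proof (induction j)
  case 0 then show ?case by simp
next
  case (Suc j)
  show ?case
  proof (cases "i = Suc j")
    case True then show ?thesis by simp
  next
    case False
    then have "i \<le> j" using Suc by simp
    then have "k i \<le> k j" using Suc by simp
    moreover have "k j \<le> k (Suc j)" using assms(1,2) Suc \<open>i \<le> j\<close> by simp
    ultimately show ?thesis by simp
  qed
qed

lemma choose_le_pow: "(n::nat) choose j \<le> n ^ j"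
  by (cases "j \<le> n") (auto simp: binomial_le_pow binomial_eq_0)

lemma bounded_sets:
  assumes "n \<ge> 1"
  shows "card {S. S \<subseteq> {1..(n::nat)} \<and> card S \<le> j} \<le> (j+1) * n^j"
proof -
  have eq: "{S. S \<subseteq> {1..n} \<and> card S \<le> j} = (\<Union>i\<in>{0..j}. {S. S \<subseteq> {1..n} \<and> card S = i})"
    by auto
  have "card (\<Union>i\<in>{0..j}. {S. S \<subseteq> {1..n} \<and> card S = i}) \<le> (\<Sum>i\<in>{0..j}. card {S. S \<subseteq> {1..n} \<and> card S = i})"
    by (rule card_UN_le) simp
  also have "\<dots> = (\<Sum>i\<in>{0..j}. n choose i)" by (simp add: n_subsets)
  also have "\<dots> \<le> (\<Sum>i\<in>{0..j}. n ^ j)"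
    by (rule sum_mono) (meson atLeastAtMost_iff assms choose_le_pow le_trans power_increasing)
  also have "\<dots> = (j+1) * n^j" by simp
  finally show ?thesis using eq by simp
qed

lemma star_count:
  assumes "T \<subseteq> {1..n}" "card T = t" "t \<le> k"
  shows "card {X. T \<subseteq> X \<and> X \<subseteq> {1..(n::nat)} \<and> card X \<le> k} \<le> (\<Sum>j=0..k-t. (n-t) choose (k-t-j))"
proof -
  let ?D = "{1..n} - T"
  have fT: "finite T" using assms(1) finite_subset by blast
  have cD: "card ?D = n - t" using assms fT by (simp add: card_Diff_subset)
  have sub: "{X. T \<subseteq> X \<and> X \<subseteq> {1..n} \<and> card X \<le> k} \<subseteq> (\<lambda>S. S \<union> T) ` (\<Union>i\<in>{0..k-t}. {S. S \<subseteq> ?D \<and> card S = i})"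
  proof
    fix X assume X: "X \<in> {X. T \<subseteq> X \<and> X \<subseteq> {1..n} \<and> card X \<le> k}"
    then have fX: "finite X" using finite_subset by blast
    have "card (X - T) = card X - t" using X fT assms(2) by (simp add: card_Diff_subset)
    then have "card (X - T) \<in> {0..k-t}" using X by auto
    moreover have "X = (X - T) \<union> T" using X by auto
    ultimately show "X \<in> (\<lambda>S. S \<union> T) ` (\<Union>i\<in>{0..k-t}. {S. S \<subseteq> ?D \<and> card S = i})"
      using X by blast
  qed
  have "card {X. T \<subseteq> X \<and> X \<subseteq> {1..n} \<and> card X \<le> k} \<le> card ((\<lambda>S. S \<union> T) ` (\<Union>i\<in>{0..k-t}. {S. S \<subseteq> ?D \<and> card S = i}))"
    by (rule card_mono[OF _ sub]) simp
  also have "\<dots> \<le> card (\<Union>i\<in>{0..k-t}. {S. S \<subseteq> ?D \<and> card S = i})" by (rule card_image_le) simp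
  also have "\<dots> \<le> (\<Sum>i\<in>{0..k-t}. card {S. S \<subseteq> ?D \<and> card S = i})" by (rule card_UN_le) simp
  also have "\<dots> = (\<Sum>i\<in>{0..k-t}. (n-t) choose i)" using cD by (simp add: n_subsets)
  also have "\<dots> = (\<Sum>j=0..k-t. (n-t) choose (k-t-j))"
    by (subst sum.atLeastAtMost_rev) simp
  finally show ?thesis .
qed


definition cK :: "nat \<Rightarrow> nat" where "cK k = (k+1) * 2^k * k"
definition n0f :: "nat \<Rightarrow> nat \<Rightarrow> nat" where "n0f K t = 2*t + cK K * (2*K)^K + 1"

lemma arith_bound:
  assumes "1 \<le> t" "t < k" "k \<le> K" "k \<le> n" "n \<ge> n0f K t"
  shows "cK k * n^(k-t-1) \<le> (n-t) choose (k-t)"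
proof -
  define m where "m = k - t"
  have m1: "m \<ge> 1" using assms m_def by simp
  have n1: "n \<ge> 1" using assms by simp
  have cmono: "cK k \<le> cK K" unfolding cK_def
    using assms(3) by (intro mult_le_mono power_increasing) auto
  have "(2*m)^m \<le> (2*K)^m" using assms m_def by (intro power_mono) auto
  also have "\<dots> \<le> (2*K)^K" using assms m_def by (intro power_increasing) auto
  finally have pm: "(2*m)^m \<le> (2*K)^K" .
  have "cK k * (2*m)^m \<le> cK K * (2*K)^K" using cmono pm by (rule mult_le_mono)
  then have nbig: "cK k * (2*m)^m \<le> n" using assms(5) unfolding n0f_def by linarith
  have n2t: "2 * t \<le> n" using assms(5) unfolding n0f_def by linarith
  have mle: "m \<le> n - t" using assms m_def by simp
  have "(real n / (2 * real m))^m \<le> (real (n-t) / real m)^m"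
  proof (rule power_mono)
    have "real n / (2 * real m) = (real n / 2) / real m" by simp
    also have "\<dots> \<le> real (n-t) / real m" using n2t m1
      by (intro divide_right_mono) (auto simp: of_nat_diff)
    finally show "real n / (2 * real m) \<le> real (n-t) / real m" .
  qed simp
  also have "\<dots> \<le> real ((n-t) choose m)" using binomial_ge_n_over_k_pow_k[OF mle] by simp
  finally have b1: "(real n / (2 * real m))^m \<le> real ((n-t) choose m)" .
  have "(real n / (2 * real m))^m = real n ^ (m-1) * (real n / (2*real m)^m)"
    using m1 by (cases m) (auto simp: power_divide field_simps)
  also have "real n ^ (m-1) * (real n / (2*real m)^m) \<ge> real n ^ (m-1) * real (cK k)"
  proof (intro mult_left_mono)
    have "real (cK k) * (2 * real m)^m \<le> real n" using nbig
      by (metis of_nat_le_iff of_nat_mult of_nat_numeral of_nat_power)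
    moreover have "(2 * real m)^m > 0" using m1 by simp
    ultimately show "real (cK k) \<le> real n / (2 * real m) ^ m" by (simp add: field_simps)
  qed simp
  finally have "real (cK k * n^(m-1)) \<le> real ((n-t) choose m)" using b1 by (simp add: mult.commute)
  then have "cK k * n^(m-1) \<le> (n-t) choose m" by (simp only: of_nat_le_iff)
  then show ?thesis unfolding m_def by (simp add: diff_diff_left)
qed


lemma top_level:
  fixes F :: "nat set set"
  assumes t1: "1 \<le> t" and tk: "t < k" and n1: "1 \<le> n"
    and Fs: "F \<subseteq> Pow {1..n}" and Fc: "\<forall>A\<in>F. card A \<le> k"
    and cond: "\<forall>A\<in>F. \<forall>B\<in>F. card (A\<inter>B) < t \<longrightarrow> card (symdiff A B) \<le> k - t"
    and nocommon: "\<forall>T. card T = t \<longrightarrow> (\<exists>B\<in>F. \<not> T \<subseteq> B)"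
  shows "card {C\<in>F. card C = k} \<le> 2^k * k * n^(k-t-1)"
proof (cases "{C\<in>F. card C = k} = {}")
  case True then show ?thesis by (simp only: True card.empty)
next
  case False
  then obtain A where A: "A \<in> F" "card A = k" by auto
  have finF: "\<And>X. X \<in> F \<Longrightarrow> finite X" using Fs finite_subset by blast
  obtain g where g: "\<forall>T. card T = t \<longrightarrow> g T \<in> F \<and> \<not> T \<subseteq> g T" using nocommon by metis
  let ?U = "(\<Union>T\<in>{T. T \<subseteq> A \<and> card T = t}. \<Union>x\<in> g T - T. (\<lambda>S. S \<union> insert x T) ` {S. S \<subseteq> {1..n} \<and> card S = k-t-1})"
  have sub: "{C\<in>F. card C = k} \<subseteq> ?U"
  proof
    fix C assume C: "C \<in> {C\<in>F. card C = k}"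
    then have CF: "C \<in> F" and cC: "card C = k" by auto
    have "t \<le> card (C \<inter> A)"
    proof (rule ccontr)
      assume "\<not> t \<le> card (C \<inter> A)"
      then have "card (symdiff C A) \<le> k - t" using cond CF A by auto
      moreover have "card (symdiff C A) + 2 * card (C \<inter> A) = k + k"
        using symdiff_card[OF finF[OF CF] finF[OF A(1)]] cC A by simp
      ultimately show False using \<open>\<not> t \<le> card (C \<inter> A)\<close> tk by linarith
    qed
    then obtain T where T: "T \<subseteq> C \<inter> A" "card T = t" "finite T" by (meson obtain_subset_with_card_n)
    let ?B = "g T"
    have BF: "?B \<in> F" and nTB: "\<not> T \<subseteq> ?B" using g T by auto
    have "C \<inter> (?B - T) \<noteq> {}"
    proof
      assume e: "C \<inter> (?B - T) = {}"
      have CB: "C \<inter> ?B = T \<inter> ?B" using e T by blast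
      have "T \<inter> ?B \<subset> T" using nTB by blast
      then have lt: "card (T \<inter> ?B) < t" using T psubset_card_mono by metis
      then have "card (symdiff C ?B) \<le> k - t" using cond CF BF CB by auto
      moreover have "card (symdiff C ?B) + 2 * card (T \<inter> ?B) = k + card ?B"
        using symdiff_card[OF finF[OF CF] finF[OF BF]] cC CB by simp
      moreover have "card (T \<inter> ?B) \<le> card ?B" using finF[OF BF] by (simp add: card_mono)
      ultimately show False using lt tk by linarith
    qed
    then obtain x where x: "x \<in> C" "x \<in> ?B" "x \<notin> T" by blast
    have ins: "insert x T \<subseteq> C" using x T by blast
    have "card (C - insert x T) = k - t - 1"
      using card_Diff_subset[OF _ ins] T x cC by simp
    moreover have "C - insert x T \<subseteq> {1..n}" using Fs CF by blast
    moreover have "C = (C - insert x T) \<union> insert x T" using ins by blast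
    ultimately show "C \<in> ?U" using T x by blast
  qed
  have finT: "finite {T. T \<subseteq> A \<and> card T = t}" using finF[OF A(1)] by simp
  have "card {C\<in>F. card C = k} \<le> card ?U"
    by (rule card_mono[OF _ sub]) (use finT finF g in auto)
  also have "\<dots> \<le> (\<Sum>T\<in>{T. T \<subseteq> A \<and> card T = t}. card (\<Union>x\<in> g T - T. (\<lambda>S. S \<union> insert x T) ` {S. S \<subseteq> {1..n} \<and> card S = k-t-1}))"
    by (rule card_UN_le[OF finT])
  also have "\<dots> \<le> (\<Sum>T\<in>{T. T \<subseteq> A \<and> card T = t}. k * n^(k-t-1))"
  proof (rule sum_mono)
    fix T assume T: "T \<in> {T. T \<subseteq> A \<and> card T = t}"
    have gF: "g T \<in> F" using g T by auto
    have fg: "finite (g T - T)" using finF[OF gF] by simp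
    have "card (\<Union>x\<in> g T - T. (\<lambda>S. S \<union> insert x T) ` {S. S \<subseteq> {1..n} \<and> card S = k-t-1})
        \<le> (\<Sum>x\<in> g T - T. card ((\<lambda>S. S \<union> insert x T) ` {S. S \<subseteq> {1..n} \<and> card S = k-t-1}))"
      by (rule card_UN_le[OF fg])
    also have "\<dots> \<le> (\<Sum>x\<in> g T - T. n^(k-t-1))"
    proof (rule sum_mono)
      fix x
      have "card ((\<lambda>S. S \<union> insert x T) ` {S. S \<subseteq> {1..n} \<and> card S = k-t-1}) \<le> card {S. S \<subseteq> {1..n} \<and> card S = k-t-1}"
        by (rule card_image_le) simp
      also have "\<dots> = n choose (k-t-1)" by (simp add: n_subsets)
      also have "\<dots> \<le> n^(k-t-1)" by (rule choose_le_pow)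
      finally show "card ((\<lambda>S. S \<union> insert x T) ` {S. S \<subseteq> {1..n} \<and> card S = k-t-1}) \<le> n^(k-t-1)" .
    qed
    also have "\<dots> = card (g T - T) * n^(k-t-1)" by simp
    also have "\<dots> \<le> k * n^(k-t-1)"
    proof -
      have "card (g T - T) \<le> card (g T)" using finF[OF gF] by (simp add: card_mono)
      also have "\<dots> \<le> k" using Fc gF by auto
      finally show ?thesis by simp
    qed
    finally show "card (\<Union>x\<in> g T - T. (\<lambda>S. S \<union> insert x T) ` {S. S \<subseteq> {1..n} \<and> card S = k-t-1}) \<le> k * n^(k-t-1)" .
  qed
  also have "\<dots> = card {T. T \<subseteq> A \<and> card T = t} * (k * n^(k-t-1))" by simp
  also have "\<dots> \<le> 2^k * (k * n^(k-t-1))"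
  proof -
    have "card {T. T \<subseteq> A \<and> card T = t} = k choose t" using n_subsets[OF finF[OF A(1)]] A by simp
    also have "\<dots> \<le> 2^k" by (rule binomial_le_pow2)
    finally show ?thesis by simp
  qed
  finally show ?thesis by simp
qed

lemma low_level:
  fixes F :: "nat set set"
  assumes t1: "1 \<le> t" and tk: "t < k" and n1: "1 \<le> n" and sk: "s < k"
    and Fs: "F \<subseteq> Pow {1..n}"
    and cond: "\<forall>A\<in>F. \<forall>B\<in>F. card (A\<inter>B) < t \<longrightarrow> card (symdiff A B) \<le> k - t"
  shows "card {C\<in>F. card C = s} \<le> 2^k * k * n^(k-t-1)"
proof (cases "{C\<in>F. card C = s} = {}")
  case True then show ?thesis by (simp only: True card.empty)
next
  case False
  then obtain A where A: "A \<in> F" "card A = s" by auto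
  have finF: "\<And>X. X \<in> F \<Longrightarrow> finite X" using Fs finite_subset by blast
  let ?Q = "{Q. Q \<subseteq> {1..n} \<and> card Q \<le> k-t-1}"
  have sub: "{C\<in>F. card C = s} \<subseteq> (\<lambda>(P,Q). P \<union> Q) ` (Pow A \<times> ?Q)"
  proof
    fix B assume B: "B \<in> {C\<in>F. card C = s}"
    then have BF: "B \<in> F" and cB: "card B = s" by auto
    have sc: "card (symdiff A B) + 2 * card (A \<inter> B) = s + s"
      using symdiff_card[OF finF[OF A(1)] finF[OF BF]] A cB by simp
    have dc: "card (B - A) + card (A \<inter> B) = s"
      using card_Diff_subset_Int[of B A] finF[OF BF] cB
      by (metis Int_commute Int_lower2 card_mono finite_Int le_add_diff_inverse2)
    have "card (B - A) \<le> k - t - 1"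
    proof (cases "t \<le> card (A \<inter> B)")
      case True then show ?thesis using dc sk by linarith
    next
      case False
      then have "card (symdiff A B) \<le> k - t" using cond A BF by auto
      then show ?thesis using sc dc tk by linarith
    qed
    moreover have "B - A \<subseteq> {1..n}" using Fs BF by blast
    moreover have "B = (A \<inter> B) \<union> (B - A)" by blast
    ultimately show "B \<in> (\<lambda>(P,Q). P \<union> Q) ` (Pow A \<times> ?Q)" by blast
  qed
  have fQ: "finite ?Q" by simp
  have "card {C\<in>F. card C = s} \<le> card ((\<lambda>(P,Q). P \<union> Q) ` (Pow A \<times> ?Q))"
    by (rule card_mono[OF _ sub]) (use finF A fQ in simp)
  also have "\<dots> \<le> card (Pow A \<times> ?Q)" by (rule card_image_le) (use finF A in simp)
  also have "\<dots> = 2^s * card ?Q" using finF[OF A(1)] A by (simp add: card_cartesian_product card_Pow)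
  also have "\<dots> \<le> 2^k * ((k-t-1+1) * n^(k-t-1))"
    using bounded_sets[OF n1, of "k-t-1"] sk by (intro mult_le_mono power_increasing) auto
  also have "\<dots> \<le> 2^k * (k * n^(k-t-1))" using tk by (intro mult_le_mono) auto
  finally show ?thesis by simp
qed


lemma single:
  fixes F :: "nat set set"
  assumes t1: "1 \<le> t" and tk: "t \<le> k" and kn: "k \<le> n"
    and Fs: "F \<subseteq> Pow {1..n}" and Fc: "\<forall>A\<in>F. card A \<le> k"
    and cond: "\<forall>A\<in>F. \<forall>B\<in>F. card (A\<inter>B) < t \<longrightarrow> card (symdiff A B) \<le> k - t"
    and kK: "k \<le> K" and nK: "n \<ge> n0f K t"
  shows "card F \<le> (\<Sum>j=0..k-t. (n-t) choose (k-t-j))"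
proof -
  have finF: "\<And>X. X \<in> F \<Longrightarrow> finite X" using Fs finite_subset by blast
  have fF: "finite F" using Fs finite_subset by (metis finite_Pow_iff finite_atLeastAtMost)
  show ?thesis
  proof (cases "t = k")
    case True
    have "\<forall>A\<in>F. \<forall>B\<in>F. A = B"
    proof (intro ballI)
      fix A B assume A: "A \<in> F" and B: "B \<in> F"
      show "A = B"
      proof (cases "card (A \<inter> B) < t")
        case True
        then have "card (symdiff A B) = 0" using cond A B \<open>t = k\<close> by auto
        then have "symdiff A B = {}" using finF[OF A] finF[OF B] unfolding symdiff_def by simp
        then show ?thesis unfolding symdiff_def by blast
      next
        case False
        then have "card (A \<inter> B) \<ge> card A" "card (A \<inter> B) \<ge> card B" using Fc A B \<open>t = k\<close> by force+
        then have "A \<inter> B = A" "A \<inter> B = B" using finF[OF A] finF[OF B]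
          by (metis Int_lower1 Int_lower2 card_seteq)+
        then show ?thesis by simp
      qed
    qed
    then have "card F \<le> Suc 0" using fF by (simp add: card_le_Suc0_iff_eq)
    then show ?thesis using True by simp
  next
    case False
    then have tk': "t < k" using tk by simp
    have n1: "1 \<le> n" using tk' kn by simp
    show ?thesis
    proof (cases "\<exists>T. card T = t \<and> (\<forall>X\<in>F. T \<subseteq> X)")
      case True
      then obtain T where T: "card T = t" "\<forall>X\<in>F. T \<subseteq> X" by blast
      show ?thesis
      proof (cases "F = {}")
        case True then show ?thesis by simp
      next
        case False
        then obtain X where "X \<in> F" by blast
        then have Tn: "T \<subseteq> {1..n}" using T Fs by blast
        have "F \<subseteq> {X. T \<subseteq> X \<and> X \<subseteq> {1..n} \<and> card X \<le> k}" using T Fs Fc by blast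
        then have "card F \<le> card {X. T \<subseteq> X \<and> X \<subseteq> {1..n} \<and> card X \<le> k}"
          by (rule card_mono[rotated]) simp
        also have "\<dots> \<le> (\<Sum>j=0..k-t. (n-t) choose (k-t-j))" by (rule star_count[OF Tn T(1) tk])
        finally show ?thesis .
      qed
    next
      case False
      then have nc: "\<forall>T. card T = t \<longrightarrow> (\<exists>B\<in>F. \<not> T \<subseteq> B)" by blast
      have "F = (\<Union>s\<in>{0..k}. {C\<in>F. card C = s})" using Fc by auto
      then have "card F \<le> (\<Sum>s\<in>{0..k}. card {C\<in>F. card C = s})"
        by (metis card_UN_le finite_atLeastAtMost)
      also have "\<dots> \<le> (\<Sum>s\<in>{0..k}. 2^k * k * n^(k-t-1))"
      proof (rule sum_mono)
        fix s assume s: "s \<in> {0..k}"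
        show "card {C\<in>F. card C = s} \<le> 2^k * k * n^(k-t-1)"
        proof (cases "s = k")
          case True then show ?thesis using top_level[OF t1 tk' n1 Fs Fc cond nc] by simp
        next
          case False then have "s < k" using s by simp
          then show ?thesis using low_level[OF t1 tk' n1 _ Fs cond] by simp
        qed
      qed
      also have "\<dots> = cK k * n^(k-t-1)" unfolding cK_def by (simp add: algebra_simps)
      also have "\<dots> \<le> (n-t) choose (k-t)" by (rule arith_bound[OF t1 tk' kK kn nK])
      also have "\<dots> \<le> (\<Sum>j=0..k-t. (n-t) choose (k-t-j))"
        using member_le_sum[of 0 "{0..k-t}" "\<lambda>j. (n-t) choose (k-t-j)"] by simp
      finally show ?thesis .
    qed
  qed
qed

theorem theorem1p4:
  "\<exists>n0 :: nat \<Rightarrow> nat \<Rightarrow> nat \<Rightarrow> nat.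
     \<forall>(r::nat) (k::nat \<Rightarrow> nat) (t::nat) (n::nat) (F::nat \<Rightarrow> nat set set).
       r \<ge> 2 \<longrightarrow> 1 \<le> t \<longrightarrow> t \<le> k 1 \<longrightarrow>
       (\<forall>i\<in>{1..<r}. k i \<le> k (Suc i)) \<longrightarrow>
       k r \<le> n \<longrightarrow> n \<ge> n0 (k (r - 1)) (k r) t \<longrightarrow>
       (\<forall>i\<in>{1..r}. F i \<subseteq> Pow {1..n}) \<longrightarrow>
       (\<forall>i\<in>{1..r}. \<forall>A\<in>F i. card A \<le> k i) \<longrightarrow>
       (\<forall>i\<in>{1..r}. \<forall>j\<in>{1..r}. \<forall>A\<in>F i. \<forall>B\<in>F j.
          card (A \<inter> B) < t \<longrightarrow> card (symdiff A B) \<le> min (k i) (k j) - t) \<longrightarrow>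
       (\<Prod>i=1..r. card (F i)) \<le>
         (\<Prod>i=1..r. \<Sum>j=0..k i - t. (n - t) choose (k i - t - j))"
proof (rule exI[of _ "\<lambda>a b t. n0f b t"], intro allI impI)
  fix r :: nat and k :: "nat \<Rightarrow> nat" and t n :: nat and F :: "nat \<Rightarrow> nat set set"
  assume r2: "r \<ge> 2" and t1: "1 \<le> t" and tk1: "t \<le> k 1"
    and mono: "\<forall>i\<in>{1..<r}. k i \<le> k (Suc i)" and kn: "k r \<le> n"
    and nK: "n \<ge> (\<lambda>a b t. n0f b t) (k (r - 1)) (k r) t"
    and Fs: "\<forall>i\<in>{1..r}. F i \<subseteq> Pow {1..n}"
    and Fc: "\<forall>i\<in>{1..r}. \<forall>A\<in>F i. card A \<le> k i"
    and cond: "\<forall>i\<in>{1..r}. \<forall>j\<in>{1..r}. \<forall>A\<in>F i. \<forall>B\<in>F j.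
          card (A \<inter> B) < t \<longrightarrow> card (symdiff A B) \<le> min (k i) (k j) - t"
  show "(\<Prod>i=1..r. card (F i)) \<le> (\<Prod>i=1..r. \<Sum>j=0..k i - t. (n - t) choose (k i - t - j))"
  proof (rule prod_mono, rule conjI)
    fix i assume i: "i \<in> {1..r}"
    have kir: "k i \<le> k r" using chain_mono[OF mono, of i r] i by auto
    have tki: "t \<le> k i" using chain_mono[OF mono, of 1 i] i tk1 by auto
    have c: "\<forall>A\<in>F i. \<forall>B\<in>F i. card (A\<inter>B) < t \<longrightarrow> card (symdiff A B) \<le> k i - t"
    proof (intro ballI impI)
      fix A B assume "A \<in> F i" "B \<in> F i" "card (A\<inter>B) < t"
      then show "card (symdiff A B) \<le> k i - t" using cond i by (metis min.idem)
    qed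
    show "card (F i) \<le> (\<Sum>j=0..k i - t. (n - t) choose (k i - t - j))"
      by (rule single[OF t1 tki _ _ _ c kir]) (use kir kn Fs Fc i nK in auto)
  qed simp
qed

end
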